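(* Let $Y$ be a statistically compact topological space such that the diagonal $\Delta Y$ is statistically closed in $Y\times Y$, and let $X$ be an open subspace of $Y$ which is statistical sequential, not statistically compact, and such that $Y\setminus X$ consists of exactly one point. Let $f:Y\to X^s$ be the unique bijection which is the identity on $X$. Then $f$ is a statistical homeomorphism.
   Context: For $A\subseteq\mathbb{N}$ let $d_n(A)=|A\cap\{1,\dots,n\}|/n$, $\overline{d}(A)=\limsup_n d_n(A)$, $\underline{d}(A)=\liminf_n d_n(A)$, and $d(A)$ their common value when equal. A sequence in $X$ is a map from an infinite subset $M\subseteq\mathbb{N}$ into $X$, written $(x_n)_{n\in M}$; a subsequence is $(x_n)_{n\in N}$ with $N\subseteq M$ infinite. It is nonthin if $\overline{d}(M)>0$. A nonthin sequence $(x_n)_{n\in M}$ is statistically convergent to $a\in X$ if for every open $U\ni a$, $d(\{n\in M:x_n\notin U\})=0$. The statistical closure $\overline{F}^{ST}$ of $F\subseteq X$ is the set of $x\in X$ such that some nonthin sequence in $F$ is statistically convergent to $x$; $F$ is statistically closed if $\overline{F}^{ST}=F$. For a space $(X,\tau)$, $\tau_{ST}=\{F\subseteq X: X\setminus F$ is statistically closed$\}$, and $X$ is statistical sequential if $\tau=\tau_{ST}$. A topological space is statistically compact if every nonthin sequence in it has a nonthin subsequence that is statistically convergent to some point of the space; a subset is statistically compact if it is so in the subspace topology. For $(X,\tau)$ not statistically compact, the one point statistical compactification is $X^s=X\cup\{\infty^X\}$ ($\infty^X\notin X$) with topology $\tau^X_s=\tau\cup\{X^s\setminus C: C$ closed and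 statistically compact subset of $X\}$. A function is statistically continuous if it maps every nonthin sequence statistically converging to $x$ to a sequence (same index set) statistically converging to the image of $x$; a bijection $f$ is a statistical homeomorphism if $f$ and $f^{-1}$ are both statistically continuous. *)

theory Defs
  imports "HOL-Analysis.Analysis" "HOL-Library.Liminf_Limsup"
begin

definition dens_n :: "nat set \<Rightarrow> nat \<Rightarrow> real" where
  "dens_n A n = real (card (A \<inter> {1..n})) / real n"

definition upper_density :: "nat set \<Rightarrow> ereal" where
  "upper_density A = limsup (\<lambda>n. ereal (dens_n A n))"

definition density_zero :: "nat set \<Rightarrow> bool" where
  "density_zero A \<longleftrightarrow> (\<lambda>n. dens_n A n) \<longlonglongrightarrow> 0"

definition nonthin :: "nat set \<Rightarrow> bool" where
  "nonthin M \<longleftrightarrow> infinite M \<and> upper_density M > 0"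

text \<open>A sequence is a pair (M, x): index set M and values x n for n \<in> M.
  Statistical convergence of the nonthin sequence (x_n)_{n\<in>M} in T to a.\<close>
definition stat_conv :: "'a topology \<Rightarrow> nat set \<Rightarrow> (nat \<Rightarrow> 'a) \<Rightarrow> 'a \<Rightarrow> bool" where
  "stat_conv T M x a \<longleftrightarrow>
     nonthin M \<and> x ` M \<subseteq> topspace T \<and> a \<in> topspace T \<and>
     (\<forall>U. openin T U \<and> a \<in> U \<longrightarrow> density_zero {n \<in> M. x n \<notin> U})"

definition stat_closure :: "'a topology \<Rightarrow> 'a set \<Rightarrow> 'a set" where
  "stat_closure T F = {a \<in> topspace T. \<exists>M x. x ` M \<subseteq> F \<and> stat_conv T M x a}"

definition stat_closed :: "'a topology \<Rightarrow> 'a set \<Rightarrow> bool" where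
  "stat_closed T F \<longleftrightarrow> F \<subseteq> topspace T \<and> stat_closure T F = F"

definition stat_sequential :: "'a topology \<Rightarrow> bool" where
  "stat_sequential T \<longleftrightarrow>
     (\<forall>U. U \<subseteq> topspace T \<longrightarrow> (openin T U \<longleftrightarrow> stat_closed T (topspace T - U)))"

definition stat_compact_space :: "'a topology \<Rightarrow> bool" where
  "stat_compact_space T \<longleftrightarrow>
     (\<forall>M x. nonthin M \<and> x ` M \<subseteq> topspace T \<longrightarrow>
        (\<exists>N a. N \<subseteq> M \<and> stat_conv T N x a))"

definition stat_compact_in :: "'a topology \<Rightarrow> 'a set \<Rightarrow> bool" where
  "stat_compact_in T C \<longleftrightarrow> C \<subseteq> topspace T \<and> stat_compact_space (subtopology T C)"

text \<open>One point statistical compactification X^s of a space X, realised on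
  the type 'a option: points of X are Some x, the point at infinity is None.\<close>
definition stat_compactification :: "'a topology \<Rightarrow> 'a option topology" where
  "stat_compactification X = topology (\<lambda>V.
     (\<exists>U. openin X U \<and> V = Some ` U) \<or>
     (\<exists>C. closedin X C \<and> stat_compact_in X C \<and> V = insert None (Some ` (topspace X - C))))"

definition stat_continuous :: "'a topology \<Rightarrow> 'b topology \<Rightarrow> ('a \<Rightarrow> 'b) \<Rightarrow> bool" where
  "stat_continuous S T f \<longleftrightarrow>
     (\<forall>x \<in> topspace S. f x \<in> topspace T) \<and>
     (\<forall>M s a. stat_conv S M s a \<longrightarrow> stat_conv T M (f \<circ> s) (f a))"

definition stat_homeomorphism :: "'a topology \<Rightarrow> 'b topology \<Rightarrow> ('a \<Rightarrow> 'b) \<Rightarrow> bool" where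
  "stat_homeomorphism S T f \<longleftrightarrow>
     bij_betw f (topspace S) (topspace T) \<and> stat_continuous S T f \<and>
     stat_continuous T S (inv_into (topspace S) f)"

end

theory Submission
  imports Defs
begin


lemma dens_nonneg: "0 \<le> dens_n A n" by (simp add: dens_n_def)

lemma dens_mono: "A \<subseteq> B \<Longrightarrow> dens_n A n \<le> dens_n B n"
  unfolding dens_n_def by (auto intro!: divide_right_mono card_mono)

lemma dens_Un: "dens_n (A \<union> B) n \<le> dens_n A n + dens_n B n"
proof -
  have "card ((A \<union> B) \<inter> {1..n}) \<le> card (A \<inter> {1..n}) + card (B \<inter> {1..n})"
    by (metis Int_Un_distrib2 card_Un_le)
  then show ?thesis unfolding dens_n_def add_divide_distrib[symmetric]
    by (intro divide_right_mono) auto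
qed

lemma density_zero_subset: "A \<subseteq> B \<Longrightarrow> density_zero B \<Longrightarrow> density_zero A"
  unfolding density_zero_def
  by (rule tendsto_sandwich[of "\<lambda>_. 0" _ _ "\<lambda>n. dens_n B n"]) (auto simp: dens_nonneg dens_mono)

lemma density_zero_Un: "density_zero A \<Longrightarrow> density_zero B \<Longrightarrow> density_zero (A \<union> B)"
  unfolding density_zero_def
  by (rule tendsto_sandwich[of "\<lambda>_. 0" _ _ "\<lambda>n. dens_n A n + dens_n B n"])
     (auto simp: dens_nonneg dens_Un intro: tendsto_add_zero)

lemma density_zero_finite: "finite A \<Longrightarrow> density_zero A"
  unfolding density_zero_def
proof (rule tendsto_sandwich[of "\<lambda>_. 0" _ _ "\<lambda>n. real (card A) / real n"])
  assume "finite A"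
  show "\<forall>\<^sub>F n in sequentially. dens_n A n \<le> real (card A) / real n"
    unfolding dens_n_def using \<open>finite A\<close>
    by (intro always_eventually allI divide_right_mono) (auto intro!: card_mono)
  show "(\<lambda>n. real (card A) / real n) \<longlonglongrightarrow> 0"
    by (rule lim_const_over_n)
qed (auto simp: dens_nonneg)

lemma nonthin_iff: "nonthin A \<longleftrightarrow> \<not> density_zero A"
proof
  assume "nonthin A"
  show "\<not> density_zero A"
  proof
    assume "density_zero A"
    then have "(\<lambda>n. ereal (dens_n A n)) \<longlonglongrightarrow> ereal 0"
      unfolding density_zero_def by simp
    then have "upper_density A = 0" unfolding upper_density_def
      by (simp add: lim_imp_Limsup zero_ereal_def)
    with \<open>nonthin A\<close> show False by (simp add: nonthin_def)
  qed
next
  assume nd: "\<not> density_zero A"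
  then have "infinite A" using density_zero_finite by blast
  moreover have "upper_density A > 0"
  proof (rule ccontr)
    assume "\<not> upper_density A > 0"
    then have ls: "limsup (\<lambda>n. ereal (dens_n A n)) \<le> 0" by (simp add: upper_density_def)
    have li: "0 \<le> liminf (\<lambda>n. ereal (dens_n A n))"
      by (rule Liminf_bounded) (simp add: dens_nonneg)
    have "liminf (\<lambda>n. ereal (dens_n A n)) \<le> limsup (\<lambda>n. ereal (dens_n A n))"
      by (rule Liminf_le_Limsup) simp
    with ls li have "liminf (\<lambda>n. ereal (dens_n A n)) = ereal 0"
      "limsup (\<lambda>n. ereal (dens_n A n)) = ereal 0" by (auto simp: zero_ereal_def[symmetric])
    then have "(\<lambda>n. ereal (dens_n A n)) \<longlonglongrightarrow> ereal 0"
      by (intro Liminf_eq_Limsup) auto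
    then have "density_zero A" unfolding density_zero_def by simp
    with nd show False by simp
  qed
  ultimately show "nonthin A" by (simp add: nonthin_def)
qed



lemma stat_conv_from_sub:
  assumes "stat_conv (subtopology S C) N x a"
  shows "stat_conv S N x a"
  unfolding stat_conv_def
proof (intro conjI allI impI)
  from assms show "nonthin N" "x ` N \<subseteq> topspace S" "a \<in> topspace S"
    by (auto simp: stat_conv_def)
  fix U assume U: "openin S U \<and> a \<in> U"
  have xC: "x ` N \<subseteq> C" "a \<in> C" using assms by (auto simp: stat_conv_def)
  have "openin (subtopology S C) (U \<inter> C)" using U by (auto simp: openin_subtopology)
  then have "density_zero {n \<in> N. x n \<notin> U \<inter> C}"
    using assms U xC unfolding stat_conv_def by blast
  moreover have "{n \<in> N. x n \<notin> U \<inter> C} = {n \<in> N. x n \<notin> U}" using xC by auto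
  ultimately show "density_zero {n \<in> N. x n \<notin> U}" by simp
qed

lemma stat_conv_to_sub:
  assumes "stat_conv S N x a" "x ` N \<subseteq> C" "a \<in> C"
  shows "stat_conv (subtopology S C) N x a"
  unfolding stat_conv_def
proof (intro conjI allI impI)
  from assms show "nonthin N" "x ` N \<subseteq> topspace (subtopology S C)" "a \<in> topspace (subtopology S C)"
    by (auto simp: stat_conv_def)
  fix V assume V: "openin (subtopology S C) V \<and> a \<in> V"
  then obtain U where U: "openin S U" "V = U \<inter> C" by (auto simp: openin_subtopology)
  then have "density_zero {n \<in> N. x n \<notin> U}" using assms V unfolding stat_conv_def by blast
  moreover have "{n \<in> N. x n \<notin> V} = {n \<in> N. x n \<notin> U}" using assms(2) U by auto
  ultimately show "density_zero {n \<in> N. x n \<notin> V}" by simp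
qed

lemma stat_conv_subseq:
  assumes "stat_conv S M x a" "N \<subseteq> M" "nonthin N"
  shows "stat_conv S N x a"
  using assms unfolding stat_conv_def
  by (auto intro: density_zero_subset[of _ "{n \<in> M. x n \<notin> _}"])

lemma stat_convD:
  assumes "stat_conv T M x a"
  shows "nonthin M" "x ` M \<subseteq> topspace T" "a \<in> topspace T"
    "\<And>U. openin T U \<Longrightarrow> a \<in> U \<Longrightarrow> density_zero {n \<in> M. x n \<notin> U}"
  using assms unfolding stat_conv_def by blast+

lemma stat_conv_closed:
  assumes "closedin T C" "stat_conv T N x a" "x ` N \<subseteq> C"
  shows "a \<in> C"
proof (rule ccontr)
  assume "a \<notin> C"
  have o: "openin T (topspace T - C)" using assms(1) by (simp add: openin_diff)
  have "a \<in> topspace T - C" using stat_convD(3)[OF assms(2)] \<open>a \<notin> C\<close> by simp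
  then have "density_zero {n \<in> N. x n \<notin> topspace T - C}" using stat_convD(4)[OF assms(2) o] by simp
  moreover have "{n \<in> N. x n \<notin> topspace T - C} = N" using assms(3) by auto
  ultimately have "density_zero N" by simp
  then show False using stat_convD(1)[OF assms(2)] nonthin_iff by simp
qed

lemma closed_stat_compact:
  assumes "closedin T C" "stat_compact_space T"
  shows "stat_compact_in T C"
  unfolding stat_compact_in_def stat_compact_space_def
proof (intro conjI allI impI)
  show CT: "C \<subseteq> topspace T" using assms closedin_subset by blast
  fix M x assume Mx: "nonthin M \<and> x ` M \<subseteq> topspace (subtopology T C)"
  then have xC: "x ` M \<subseteq> C" by simp
  have "nonthin M \<and> x ` M \<subseteq> topspace T"
    using Mx xC CT by simp
  then obtain N a where N: "N \<subseteq> M" "stat_conv T N x a"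
    using assms(2) unfolding stat_compact_space_def by meson
  have xN: "x ` N \<subseteq> C" using xC N(1) by (meson image_mono order_trans)
  have "a \<in> C" using stat_conv_closed[OF assms(1) N(2) xN] .
  then have "stat_conv (subtopology T C) N x a"
    using stat_conv_to_sub[OF N(2) xN] by simp
  with N show "\<exists>N a. N \<subseteq> M \<and> stat_conv (subtopology T C) N x a" by blast
qed

lemma closed_sub_stat_compact:
  assumes "stat_compact_in T C0" "closedin T C" "C \<subseteq> C0"
  shows "stat_compact_in T C"
proof -
  have "closedin (subtopology T C0) C" using assms
    by (intro closedin_subset_topspace)
  moreover have "stat_compact_space (subtopology T C0)" using assms(1) stat_compact_in_def by blast
  ultimately have "stat_compact_in (subtopology T C0) C"
    using closed_stat_compact by blast
  moreover have "subtopology (subtopology T C0) C = subtopology T C"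
    using assms(3) by (simp add: subtopology_subtopology Int_absorb1)
  ultimately show ?thesis using assms closedin_subset
    unfolding stat_compact_in_def by simp
qed

lemma stat_compact_Un:
  assumes "stat_compact_in T C1" "stat_compact_in T C2"
  shows "stat_compact_in T (C1 \<union> C2)"
  unfolding stat_compact_in_def stat_compact_space_def
proof (intro conjI allI impI)
  show C12: "C1 \<union> C2 \<subseteq> topspace T" using assms by (auto simp: stat_compact_in_def)
  fix M x assume Mx: "nonthin M \<and> x ` M \<subseteq> topspace (subtopology T (C1 \<union> C2))"
  define M1 where "M1 = {n \<in> M. x n \<in> C1}"
  define M2 where "M2 = {n \<in> M. x n \<notin> C1}"
  have "M = M1 \<union> M2" by (auto simp: M1_def M2_def)
  have sub: "subtopology T Ci = subtopology (subtopology T (C1 \<union> C2)) Ci"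
    if "Ci \<subseteq> C1 \<union> C2" for Ci
    using that by (simp add: subtopology_subtopology Int_absorb1)
  have "nonthin M1 \<or> nonthin M2"
    using Mx \<open>M = M1 \<union> M2\<close> density_zero_Un[of M1 M2] nonthin_iff by auto
  then show "\<exists>N a. N \<subseteq> M \<and> stat_conv (subtopology T (C1 \<union> C2)) N x a"
  proof
    assume "nonthin M1"
    moreover have "x ` M1 \<subseteq> topspace (subtopology T C1)"
      using assms(1) by (auto simp: M1_def stat_compact_in_def)
    ultimately obtain N a where "N \<subseteq> M1" "stat_conv (subtopology T C1) N x a"
      using assms(1) unfolding stat_compact_in_def stat_compact_space_def by blast
    then have "stat_conv (subtopology T (C1 \<union> C2)) N x a"
      using sub[of C1] stat_conv_from_sub[of "subtopology T (C1 \<union> C2)" C1] by simp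
    then show ?thesis using \<open>N \<subseteq> M1\<close> by (auto simp: M1_def)
  next
    assume "nonthin M2"
    moreover have "x ` M2 \<subseteq> topspace (subtopology T C2)"
      using Mx C12 by (auto simp: M2_def)
    ultimately obtain N a where "N \<subseteq> M2" "stat_conv (subtopology T C2) N x a"
      using assms(2) unfolding stat_compact_in_def stat_compact_space_def by blast
    then have "stat_conv (subtopology T (C1 \<union> C2)) N x a"
      using sub[of C2] stat_conv_from_sub[of "subtopology T (C1 \<union> C2)" C2] by simp
    then show ?thesis using \<open>N \<subseteq> M2\<close> by (auto simp: M2_def)
  qed
qed

lemma stat_conv_pair:
  assumes "stat_conv S N x a" "stat_conv T N y b"
  shows "stat_conv (prod_topology S T) N (\<lambda>n. (x n, y n)) (a, b)"
  unfolding stat_conv_def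
proof (intro conjI allI impI)
  from assms show "nonthin N" "(\<lambda>n. (x n, y n)) ` N \<subseteq> topspace (prod_topology S T)"
    "(a, b) \<in> topspace (prod_topology S T)" by (auto simp: stat_conv_def)
  fix W assume W: "openin (prod_topology S T) W \<and> (a, b) \<in> W"
  then obtain U V where UV: "openin S U" "openin T V" "a \<in> U" "b \<in> V" "U \<times> V \<subseteq> W"
    using openin_prod_topology_alt[of S T W] by blast
  have "density_zero ({n \<in> N. x n \<notin> U} \<union> {n \<in> N. y n \<notin> V})"
    using assms UV by (intro density_zero_Un) (auto simp: stat_conv_def)
  then show "density_zero {n \<in> N. (x n, y n) \<notin> W}"
    by (rule density_zero_subset[rotated]) (use UV in auto)
qed



definition SCL :: "'a topology \<Rightarrow> 'a option set \<Rightarrow> bool" where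
  "SCL X V \<longleftrightarrow> (\<exists>U. openin X U \<and> V = Some ` U) \<or>
     (\<exists>C. closedin X C \<and> stat_compact_in X C \<and> V = insert None (Some ` (topspace X - C)))"

lemma SCL_vimage_open:
  assumes "SCL X V" shows "openin X (Some -` V)"
  using assms unfolding SCL_def
proof (elim disjE exE conjE)
  fix U assume "openin X U" "V = Some ` U"
  then show ?thesis by (simp add: inj_vimage_image_eq)
next
  fix C assume "closedin X C" "V = insert None (Some ` (topspace X - C))"
  moreover have "Some -` insert None (Some ` (topspace X - C)) = topspace X - C" by auto
  ultimately show ?thesis by (simp add: openin_diff)
qed

lemma SCL_sub: "SCL X V \<Longrightarrow> V \<subseteq> insert None (Some ` topspace X)"
  unfolding SCL_def using openin_subset by blast

lemma stat_compact_in_empty: "stat_compact_in X {}"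
  unfolding stat_compact_in_def stat_compact_space_def nonthin_def by auto

lemma istopology_SCL: "istopology (SCL X)"
  unfolding istopology_def
proof (intro conjI allI impI)
  fix S T assume S: "SCL X S" and T: "SCL X T"
  show "SCL X (S \<inter> T)"
    using S[unfolded SCL_def]
  proof (elim disjE exE conjE)
    fix U1 assume U1: "openin X U1" "S = Some ` U1"
    show ?thesis using T[unfolded SCL_def]
    proof (elim disjE exE conjE)
      fix U2 assume U2: "openin X U2" "T = Some ` U2"
      have "S \<inter> T = Some ` (U1 \<inter> U2)" using U1 U2 by auto
      moreover have "openin X (U1 \<inter> U2)" using U1 U2 by (intro openin_Int)
      ultimately show ?thesis unfolding SCL_def by blast
    next
      fix C assume C: "closedin X C" "T = insert None (Some ` (topspace X - C))"
      have "S \<inter> T = Some ` (U1 \<inter> (topspace X - C))" using U1 C by auto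
      moreover have "openin X (U1 \<inter> (topspace X - C))" using U1 C by (intro openin_Int openin_diff) auto
      ultimately show ?thesis unfolding SCL_def by blast
    qed
  next
    fix C1 assume C1: "closedin X C1" "stat_compact_in X C1" "S = insert None (Some ` (topspace X - C1))"
    show ?thesis using T[unfolded SCL_def]
    proof (elim disjE exE conjE)
      fix U2 assume U2: "openin X U2" "T = Some ` U2"
      have "S \<inter> T = Some ` (U2 \<inter> (topspace X - C1))" using U2 C1 by auto
      moreover have "openin X (U2 \<inter> (topspace X - C1))" using U2 C1 by (intro openin_Int openin_diff) auto
      ultimately show ?thesis unfolding SCL_def by blast
    next
      fix C2 assume C2: "closedin X C2" "stat_compact_in X C2" "T = insert None (Some ` (topspace X - C2))"
      have "S \<inter> T = insert None (Some ` (topspace X - (C1 \<union> C2)))" using C1 C2 by auto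
      moreover have "closedin X (C1 \<union> C2)" using C1 C2 by (intro closedin_Un)
      moreover have "stat_compact_in X (C1 \<union> C2)" using C1 C2 by (intro stat_compact_Un)
      ultimately show ?thesis unfolding SCL_def by blast
    qed
  qed
next
  fix K assume K: "\<forall>V\<in>K. SCL X V"
  define U0 where "U0 = Some -` \<Union>K"
  have U0eq: "U0 = \<Union>((\<lambda>V. Some -` V) ` K)" unfolding U0_def by auto
  have oU0: "openin X U0" unfolding U0eq using K SCL_vimage_open by (intro openin_Union) auto
  show "SCL X (\<Union>K)"
  proof (cases "None \<in> \<Union>K")
    case False
    have "\<Union>K = Some ` U0"
    proof
      show "\<Union>K \<subseteq> Some ` U0"
      proof
        fix v assume v: "v \<in> \<Union>K"
        then obtain z where "v = Some z" using False by (cases v) auto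
        then show "v \<in> Some ` U0" using v by (auto simp: U0_def)
      qed
    qed (auto simp: U0_def)
    then show ?thesis using oU0 unfolding SCL_def by blast
  next
    case True
    then obtain V0 where V0: "V0 \<in> K" "None \<in> V0" by blast
    then have "SCL X V0" using K by blast
    then obtain C0 where C0: "closedin X C0" "stat_compact_in X C0"
      "V0 = insert None (Some ` (topspace X - C0))"
      using V0(2) unfolding SCL_def by auto
    have U0top: "U0 \<subseteq> topspace X" using oU0 openin_subset by blast
    define C where "C = topspace X - U0"
    have cC: "closedin X C" unfolding C_def using oU0 by (simp add: closedin_diff)
    have "topspace X - C0 \<subseteq> U0" using V0 C0 by (auto simp: U0_def)
    then have "C \<subseteq> C0" using C_def by blast
    then have sC: "stat_compact_in X C" using closed_sub_stat_compact C0 cC by blast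
    have "topspace X - C = U0" using U0top C_def by blast
    moreover have "\<Union>K = insert None (Some ` U0)"
    proof
      show "\<Union>K \<subseteq> insert None (Some ` U0)"
      proof
        fix v assume v: "v \<in> \<Union>K"
        show "v \<in> insert None (Some ` U0)"
        proof (cases v)
          case (Some z) then show ?thesis using v by (auto simp: U0_def)
        qed simp
      qed
    qed (use True in \<open>auto simp: U0_def\<close>)
    ultimately show ?thesis using cC sC unfolding SCL_def by metis
  qed
qed

lemma SC_eq: "stat_compactification X = topology (SCL X)"
  unfolding stat_compactification_def SCL_def[abs_def] by (rule refl)

lemma openin_SC: "openin (stat_compactification X) = SCL X"
  unfolding SC_eq by (rule topology_inverse'[OF istopology_SCL])

lemma topspace_SC: "topspace (stat_compactification X) = insert None (Some ` topspace X)"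
proof -
  have h: "SCL X (insert None (Some ` topspace X))"
    unfolding SCL_def by (rule disjI2, rule exI[of _ "{}"]) (simp add: stat_compact_in_empty)
  have "\<Union>{S. SCL X S} = insert None (Some ` topspace X)"
  proof (rule equalityI)
    show "\<Union>{S. SCL X S} \<subseteq> insert None (Some ` topspace X)"
      using SCL_sub[of X] by (simp add: Sup_le_iff)
    show "insert None (Some ` topspace X) \<subseteq> \<Union>{S. SCL X S}"
      using h by (rule Union_upper[OF CollectI])
  qed
  then show ?thesis unfolding topspace_def openin_SC .
qed



theorem mainTheorem20:
  fixes Y :: "'a topology" and X :: "'a set" and p :: 'a
  assumes "stat_compact_space Y"
    and "stat_closed (prod_topology Y Y) {(y, y) | y. y \<in> topspace Y}"
    and "X \<subseteq> topspace Y" and "openin Y X"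
    and "stat_sequential (subtopology Y X)"
    and "\<not> stat_compact_space (subtopology Y X)"
    and "topspace Y - X = {p}"
  shows "stat_homeomorphism Y (stat_compactification (subtopology Y X))
           (\<lambda>y. if y \<in> X then Some y else None)"
proof -
  define XT where "XT = subtopology Y X"
  define K where "K = stat_compactification XT"
  define f where "f = (\<lambda>y. if y \<in> X then Some y else None)"
  define D where "D = {(y, y) | y. y \<in> topspace Y}"
  have topXT: "topspace XT = X" unfolding XT_def using assms(3) by auto
  have topK: "topspace K = insert None (Some ` X)" unfolding K_def topspace_SC topXT ..
  have topY: "topspace Y = insert p X" and pX: "p \<notin> X" using assms(3,7) by auto
  have fp: "f p = None" using pX by (simp add: f_def)
  have fX: "x \<in> X \<Longrightarrow> f x = Some x" for x by (simp add: f_def)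
  have injX: "inj_on f X" using fX by (simp add: inj_on_def)
  have inj: "inj_on f (topspace Y)" unfolding topY using injX fp fX
    by (auto simp: inj_on_insert)
  have imgX: "f ` X = Some ` X" using fX by (auto intro: image_cong)
  have img: "f ` topspace Y = topspace K" unfolding topY topK using fp imgX by simp
  have bij: "bij_betw f (topspace Y) (topspace K)" using inj img by (simp add: bij_betw_def)
  define g where "g = inv_into (topspace Y) f"
  have gN: "g None = p" unfolding g_def using inj fp topY by (intro inv_into_f_eq) auto
  have gS: "x \<in> X \<Longrightarrow> g (Some x) = x" for x unfolding g_def using inj fX topY
    by (intro inv_into_f_eq) auto
  have gtop: "v \<in> topspace K \<Longrightarrow> g v \<in> topspace Y" for v
    unfolding g_def using img inv_into_into by metis
  have openK: "openin K V \<longleftrightarrow> SCL XT V" for V unfolding K_def openin_SC ..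
  have SD: "stat_closure (prod_topology Y Y) D = D"
    using assms(2) unfolding D_def stat_closed_def by blast

  have contf: "stat_continuous Y K f"
    unfolding stat_continuous_def
  proof (intro conjI ballI allI impI)
    show "f x \<in> topspace K" if "x \<in> topspace Y" for x using img that by blast
    fix M s a assume sc: "stat_conv Y M s a"
    note scD = stat_convD[OF sc]
    show "stat_conv K M (f \<circ> s) (f a)"
      unfolding stat_conv_def
    proof (intro conjI allI impI)
      show "nonthin M" by (rule scD(1))
      show "(f \<circ> s) ` M \<subseteq> topspace K" using scD(2) img by auto
      show "f a \<in> topspace K" using scD(3) img by blast
      fix V assume V: "openin K V \<and> f a \<in> V"
      then have "SCL XT V" using openK by blast
      then show "density_zero {n \<in> M. (f \<circ> s) n \<notin> V}"
        unfolding SCL_def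
      proof (elim disjE exE conjE)
        fix U assume U: "openin XT U" "V = Some ` U"
        have aU: "a \<in> X" "a \<in> U"
          using V U pX unfolding f_def by (auto split: if_splits)
        obtain U' where U': "openin Y U'" "U = U' \<inter> X"
          using U(1) unfolding XT_def openin_subtopology by blast
        have oU: "openin Y U" using U' assms(4) by (simp add: openin_Int)
        have "density_zero {n \<in> M. s n \<notin> U}" using scD(4)[OF oU aU(2)] .
        moreover have "{n \<in> M. (f \<circ> s) n \<notin> V} \<subseteq> {n \<in> M. s n \<notin> U}"
          using U U' by (auto simp: f_def)
        ultimately show ?thesis using density_zero_subset by blast
      next
        fix C assume C: "closedin XT C" "stat_compact_in XT C" "V = insert None (Some ` (topspace XT - C))"
        have CX: "C \<subseteq> X" using closedin_subset[OF C(1)] topXT by simp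
        define N where "N = {n \<in> M. s n \<in> C}"
        have sub: "{n \<in> M. (f \<circ> s) n \<notin> V} \<subseteq> N"
          using C(3) topXT by (auto simp: N_def f_def)
        have "density_zero N"
        proof (rule ccontr)
          assume "\<not> density_zero N"
          then have ntN: "nonthin N" using nonthin_iff by blast
          have sN: "s ` N \<subseteq> topspace (subtopology XT C)" using CX topXT by (auto simp: N_def)
          obtain N' c where N': "N' \<subseteq> N" "stat_conv (subtopology XT C) N' s c"
            using C(2) ntN sN unfolding stat_compact_in_def stat_compact_space_def by meson
          have cC: "c \<in> C" using stat_convD(3)[OF N'(2)] by simp
          have scc: "stat_conv Y N' s c"
            using stat_conv_from_sub[OF stat_conv_from_sub[OF N'(2)[unfolded XT_def]]] .
          have N'M: "N' \<subseteq> M" using N'(1) by (auto simp: N_def)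
          have sca: "stat_conv Y N' s a"
            using stat_conv_subseq[OF sc N'M stat_convD(1)[OF N'(2)]] .
          have pc: "stat_conv (prod_topology Y Y) N' (\<lambda>n. (s n, s n)) (a, c)"
            using stat_conv_pair[OF sca scc] .
          have "(\<lambda>n. (s n, s n)) ` N' \<subseteq> D"
            using stat_convD(2)[OF sca] unfolding D_def by auto
          then have "(a, c) \<in> stat_closure (prod_topology Y Y) D"
            unfolding stat_closure_def using pc stat_convD(3)[OF pc] by blast
          then have "(a, c) \<in> D" using SD by simp
          then have "a = c" unfolding D_def by simp
          then have "a \<in> X" "a \<in> C" using cC CX by auto
          then show False using V C(3) by (auto simp: f_def)
        qed
        then show ?thesis using sub density_zero_subset by blast
      qed
    qed
  qed

  have contg: "stat_continuous K Y g"
    unfolding stat_continuous_def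
  proof (intro conjI ballI allI impI)
    show "g x \<in> topspace Y" if "x \<in> topspace K" for x using gtop that .
    fix M t b assume sc: "stat_conv K M t b"
    note scD = stat_convD[OF sc]
    show "stat_conv Y M (g \<circ> t) (g b)"
      unfolding stat_conv_def
    proof (intro conjI allI impI)
      show "nonthin M" by (rule scD(1))
      show "(g \<circ> t) ` M \<subseteq> topspace Y" using scD(2) gtop by auto
      show "g b \<in> topspace Y" using scD(3) gtop by blast
      fix U assume U: "openin Y U \<and> g b \<in> U"
      have tM: "t n \<in> insert None (Some ` X)" if "n \<in> M" for n using scD(2) that topK by auto
      show "density_zero {n \<in> M. (g \<circ> t) n \<notin> U}"
      proof (cases b)
        case None
        then have pU: "p \<in> U" using U gN by simp
        define C where "C = topspace Y - U"
        have cY: "closedin Y C" unfolding C_def using U by (simp add: closedin_diff)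
        have CX: "C \<subseteq> X" unfolding C_def using topY pU by auto
        have cXT: "closedin XT C" unfolding XT_def using cY CX by (rule closedin_subset_topspace)
        have "stat_compact_in Y C" using closed_stat_compact[OF cY assms(1)] .
        moreover have "subtopology XT C = subtopology Y C"
          unfolding XT_def using CX by (simp add: subtopology_subtopology Int_absorb1)
        ultimately have sXT: "stat_compact_in XT C"
          using CX topXT unfolding stat_compact_in_def by simp
        define V where "V = insert None (Some ` (topspace XT - C))"
        have "SCL XT V" unfolding SCL_def V_def using cXT sXT by blast
        then have oV: "openin K V" using openK by blast
        have "density_zero {n \<in> M. t n \<notin> V}" using scD(4)[OF oV] None V_def by simp
        moreover have "{n \<in> M. (g \<circ> t) n \<notin> U} \<subseteq> {n \<in> M. t n \<notin> V}"
        proof (safe)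
          fix n assume n: "n \<in> M" "(g \<circ> t) n \<notin> U" "t n \<in> V"
          show False
          proof (cases "t n")
            case None then show False using n gN pU by simp
          next
            case (Some z)
            then have "z \<in> X" "z \<notin> C" using n(3) topXT V_def by auto
            then show False using n Some gS topY C_def by auto
          qed
        qed
        ultimately show ?thesis using density_zero_subset by blast
      next
        case (Some a)
        then have aX: "a \<in> X" using scD(3) topK by auto
        then have aU: "a \<in> U" using U Some gS by simp
        define V where "V = Some ` (U \<inter> X)"
        have "openin XT (U \<inter> X)" unfolding XT_def openin_subtopology using U by blast
        then have "SCL XT V" unfolding SCL_def V_def by blast
        then have oV: "openin K V" using openK by blast
        have "density_zero {n \<in> M. t n \<notin> V}" using scD(4)[OF oV] Some V_def aX aU by simp
        moreover have "{n \<in> M. (g \<circ> t) n \<notin> U} \<subseteq> {n \<in> M. t n \<notin> V}"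
          using gS by (auto simp: V_def)
        ultimately show ?thesis using density_zero_subset by blast
      qed
    qed
  qed

  show ?thesis
    unfolding stat_homeomorphism_def
    using bij contf contg unfolding K_def XT_def f_def g_def by blast
qed

end
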